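(* Let $\mathcal{X}$ be a finite set, $a:2^{\mathcal{X}}\to\mathbb{R}$ a monotone set function, $n\ge1$ and $l\ge1$ integers, and $\{\pi_\theta\}_{\theta\in\Theta}$ an expressive set-conditioned policy family. If $\theta^*\in\Theta$ is a greedy policy, i.e. $\mathcal{J}(\theta^*,\theta^* )\ge\mathcal{J}(\theta,\theta^* )$ for all $\theta\in\Theta$, then the set produced by $\mathrm{GS}(a,\pi_{\theta^*},n,l)$ is an exact greedy solution with probability $1$.
   Context: Marginal gain: $\Delta_a(x\mid B):=a(B\cup\{x\})-a(B)$. $a$ is monotone if $\Delta_a(x\mid B)\ge0$ for all $B\subseteq\mathcal X$, $x\in\mathcal X\setminus B$. A set-conditioned policy family assigns to each $\theta\in\Theta$ and each subset $B\subseteq\mathcal X$ a probability distribution $\pi_\theta(\cdot\mid B)$ on $\mathcal X$; it is expressive if for every assignment $B\mapsto p_B$ of probability distributions on $\mathcal X$ to subsets there is $\theta\in\Theta$ with $\pi_\theta(\cdot\mid B)=p_B$ for all $B$. Greedy sampling $\mathrm{GS}(a,\pi_\theta,k,l)$ is the random $k$-step procedure: $B_0=\emptyset$; for $i=0,\dots,k-1$, draw $l$ i.i.d. candidates $x_{i,0},\dots,x_{i,l-1}\sim\pi_\theta(\cdot\mid B_i)$, let $x_i$ be a candidate maximizing $\Delta_a(x_{i,j}\mid B_i)$ over $j$ (ties broken uniformly at random), and set $B_{i+1}=B_i\cup\{x_i\}$; output $B_k$. Expected gain: $\mathcal J(\theta,\theta'):=\frac1n\sum_{k=0}^{n-1}\mathbb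 E_{B\sim\mathrm{GS}(a,\pi_{\theta'},k,1)}\big[\mathbb E_{x\sim\pi_\theta(\cdot\mid B)}[\Delta_a(x\mid B)]\big]$. A set $B_n\subseteq\mathcal X$ is an exact greedy solution if there exist $x_0,\dots,x_{n-1}\in\mathcal X$ with $B_n=\{x_0,\dots,x_{n-1}\}$ and $x_t\in\arg\max_{x'\in\mathcal X}\Delta_a(x'\mid\{x_0,\dots,x_{t-1}\})$ for every $0\le t\le n-1$ (with $\{x_0,\dots,x_{-1}\}=\emptyset$). *)

theory Defs
  imports "HOL-Probability.Probability"
begin

definition marg_gain :: "('x set \<Rightarrow> real) \<Rightarrow> 'x \<Rightarrow> 'x set \<Rightarrow> real" where
  "marg_gain a x B = a (B \<union> {x}) - a B"

definition monotone_setfun :: "('x set \<Rightarrow> real) \<Rightarrow> bool" where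
  "monotone_setfun a \<longleftrightarrow> (\<forall>B x. x \<notin> B \<longrightarrow> marg_gain a x B \<ge> 0)"

definition expressive :: "('th \<Rightarrow> 'x set \<Rightarrow> 'x pmf) \<Rightarrow> bool" where
  "expressive pol \<longleftrightarrow> (\<forall>p :: 'x set \<Rightarrow> 'x pmf. \<exists>\<theta>. \<forall>B. pol \<theta> B = p B)"

definition gs_step :: "('x set \<Rightarrow> real) \<Rightarrow> 'x pmf \<Rightarrow> nat \<Rightarrow> 'x set \<Rightarrow> 'x set pmf" where
  "gs_step a p l B =
     do { xs \<leftarrow> replicate_pmf l p;
          let m = Max ((\<lambda>x. marg_gain a x B) ` set xs);
          j \<leftarrow> pmf_of_set {j. j < l \<and> marg_gain a (xs ! j) B = m};
          return_pmf (B \<union> {xs ! j}) }"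

fun GS :: "('x set \<Rightarrow> real) \<Rightarrow> ('th \<Rightarrow> 'x set \<Rightarrow> 'x pmf) \<Rightarrow> 'th \<Rightarrow> nat \<Rightarrow> nat \<Rightarrow> 'x set pmf" where
  "GS a pol \<theta> 0 l = return_pmf {}"
| "GS a pol \<theta> (Suc k) l = GS a pol \<theta> k l \<bind> (\<lambda>B. gs_step a (pol \<theta> B) l B)"

definition expected_gain ::
  "('x set \<Rightarrow> real) \<Rightarrow> ('th \<Rightarrow> 'x set \<Rightarrow> 'x pmf) \<Rightarrow> nat \<Rightarrow> 'th \<Rightarrow> 'th \<Rightarrow> real" where
  "expected_gain a pol n \<theta> \<theta>' =
     (1 / real n) * (\<Sum>k<n. measure_pmf.expectation (GS a pol \<theta>' k 1)
        (\<lambda>B. measure_pmf.expectation (pol \<theta> B) (\<lambda>x. marg_gain a x B)))"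

definition exact_greedy_solution :: "('x set \<Rightarrow> real) \<Rightarrow> nat \<Rightarrow> 'x set \<Rightarrow> bool" where
  "exact_greedy_solution a n Bn \<longleftrightarrow>
     (\<exists>xs. length xs = n \<and> Bn = set xs \<and>
        (\<forall>t<n. \<forall>x'. marg_gain a x' (set (take t xs)) \<le> marg_gain a (xs ! t) (set (take t xs))))"

end

theory Submission
  imports Defs
begin

lemma gs_step_supp:
  assumes "l \<ge> 1" "C \<in> set_pmf (gs_step a p l B)"
  shows "\<exists>x\<in>set_pmf p. C = B \<union> {x}"
proof -
  from assms(2) obtain xs where xs: "xs \<in> set_pmf (replicate_pmf l p)"
    and C: "C \<in> set_pmf (pmf_of_set {j. j < l \<and> marg_gain a (xs ! j) B =
          Max ((\<lambda>x. marg_gain a x B) ` set xs)} \<bind> (\<lambda>j. return_pmf (B \<union> {xs ! j})))"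
    unfolding gs_step_def Let_def by auto
  have len: "length xs = l" and sub: "set xs \<subseteq> set_pmf p"
    using xs by (auto simp: set_replicate_pmf)
  let ?m = "Max ((\<lambda>x. marg_gain a x B) ` set xs)"
  have ne: "xs \<noteq> []" using len assms(1) by auto
  have "?m \<in> (\<lambda>x. marg_gain a x B) ` set xs" using ne by (intro Max_in) auto
  then obtain y where y: "y \<in> set xs" "marg_gain a y B = ?m" by auto
  then obtain j where "j < l" "xs ! j = y" using len by (auto simp: in_set_conv_nth)
  then have nE: "{j. j < l \<and> marg_gain a (xs ! j) B = ?m} \<noteq> {}" using y by auto
  from C obtain j where j: "j \<in> {j. j < l \<and> marg_gain a (xs ! j) B = ?m}" "C = B \<union> {xs ! j}"
    using nE by auto
  then have "xs ! j \<in> set_pmf p" using sub len by auto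
  then show ?thesis using j by blast
qed

lemma gs_step_1_supp:
  assumes "x \<in> set_pmf p"
  shows "B \<union> {x} \<in> set_pmf (gs_step a p 1 B)"
proof -
  have "[x] \<in> set_pmf (replicate_pmf 1 p)" using assms by (auto simp: set_replicate_pmf)
  moreover have "{j. j < (1::nat) \<and> marg_gain a ([x] ! j) B = Max ((\<lambda>x. marg_gain a x B) ` set [x])} = {0}"
    by auto
  ultimately show ?thesis unfolding gs_step_def Let_def by (auto intro!: bexI[of _ "[x]"])
qed

theorem mainTheorem5:
  fixes a :: "('x::finite) set \<Rightarrow> real"
    and pol :: "'th \<Rightarrow> 'x set \<Rightarrow> 'x pmf"
    and n l :: nat
    and \<theta>star :: 'th
  assumes "monotone_setfun a"
    and "n \<ge> 1" and "l \<ge> 1"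
    and "expressive pol"
    and "\<forall>\<theta>. expected_gain a pol n \<theta>star \<theta>star \<ge> expected_gain a pol n \<theta> \<theta>star"
  shows "measure_pmf.prob (GS a pol \<theta>star n l) {B. exact_greedy_solution a n B} = 1"
proof -
  define g where "g B = Max (range (\<lambda>x. marg_gain a x B))" for B
  have gle: "marg_gain a x B \<le> g B" for x B unfolding g_def by (intro Max_ge) auto
  have gex: "\<exists>x. marg_gain a x B = g B" for B
  proof -
    have "g B \<in> range (\<lambda>x. marg_gain a x B)" unfolding g_def by (intro Max_in) auto
    then show ?thesis by auto
  qed
  define e where "e \<theta> B = measure_pmf.expectation (pol \<theta> B) (\<lambda>x. marg_gain a x B)" for \<theta> B
  have e_sum: "e \<theta> B = (\<Sum>x\<in>UNIV. marg_gain a x B * pmf (pol \<theta> B) x)" for \<theta> B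
    unfolding e_def by (rule integral_measure_pmf_real) auto
  have sum1: "(\<Sum>x\<in>UNIV. pmf (pol \<theta> B) x) = 1" for \<theta> B by (rule sum_pmf_eq_1) auto
  have J: "expected_gain a pol n \<theta> \<theta>star =
      (1 / real n) * (\<Sum>k<n. \<Sum>B\<in>UNIV. e \<theta> B * pmf (GS a pol \<theta>star k 1) B)" for \<theta>
    unfolding expected_gain_def e_def[symmetric]
    by (intro arg_cong2[where f="(*)"] refl sum.cong integral_measure_pmf_real) auto
  define best where "best B = (SOME x. marg_gain a x B = g B)" for B
  have best: "marg_gain a (best B) B = g B" for B unfolding best_def by (rule someI_ex) (rule gex)
  obtain \<theta>' where th': "\<And>B. pol \<theta>' B = return_pmf (best B)"
    using spec[OF assms(4)[unfolded expressive_def], of "\<lambda>B. return_pmf (best B)"] by blast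
  have e': "e \<theta>' B = g B" for B unfolding e_def th' using best by simp
  have ele: "e \<theta>star B \<le> g B" for B
  proof -
    have "e \<theta>star B \<le> (\<Sum>x\<in>UNIV. g B * pmf (pol \<theta>star B) x)"
      unfolding e_sum by (intro sum_mono mult_right_mono gle) auto
    also have "\<dots> = g B" using sum1 by (simp add: sum_distrib_left[symmetric])
    finally show ?thesis .
  qed
  define P where "P k B = pmf (GS a pol \<theta>star k 1) B" for k B
  have "(1 / real n) * (\<Sum>k<n. \<Sum>B\<in>UNIV. g B * P k B) \<le>
        (1 / real n) * (\<Sum>k<n. \<Sum>B\<in>UNIV. e \<theta>star B * P k B)"
    using spec[OF assms(5), of "\<theta>'"] J[of "\<theta>'"] J[of \<theta>star] unfolding e' P_def by simp
  then have "(\<Sum>k<n. \<Sum>B\<in>UNIV. g B * P k B) \<le> (\<Sum>k<n. \<Sum>B\<in>UNIV. e \<theta>star B * P k B)"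
    using assms(2) by (simp add: divide_le_cancel)
  then have "(\<Sum>k<n. \<Sum>B\<in>UNIV. (g B - e \<theta>star B) * P k B) \<le> 0"
    by (simp add: left_diff_distrib sum_subtractf)
  moreover have nn: "\<And>k B. 0 \<le> (g B - e \<theta>star B) * P k B"
    using ele unfolding P_def by (simp)
  ultimately have "(\<Sum>k<n. \<Sum>B\<in>UNIV. (g B - e \<theta>star B) * P k B) = 0"
    by (meson order_antisym sum_nonneg)
  then have z: "\<And>k B. k < n \<Longrightarrow> (g B - e \<theta>star B) * P k B = 0"
    using nn by (simp add: sum_nonneg_eq_0_iff sum_nonneg)
  have K: "marg_gain a x B = g B"
    if k: "k < n" and B: "B \<in> set_pmf (GS a pol \<theta>star k 1)" and x: "x \<in> set_pmf (pol \<theta>star B)" for k B x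
  proof -
    have "P k B > 0" using B unfolding P_def by (simp add: pmf_positive)
    then have eg: "e \<theta>star B = g B" using z[OF k, of B] by simp
    have "(\<Sum>y\<in>UNIV. (g B - marg_gain a y B) * pmf (pol \<theta>star B) y) = g B - e \<theta>star B"
      unfolding e_sum using sum1[of \<theta>star B]
      by (simp add: left_diff_distrib sum_subtractf sum_distrib_left[symmetric])
    then have "(\<Sum>y\<in>UNIV. (g B - marg_gain a y B) * pmf (pol \<theta>star B) y) = 0" using eg by simp
    moreover have "\<And>y. 0 \<le> (g B - marg_gain a y B) * pmf (pol \<theta>star B) y" using gle by simp
    ultimately have "(g B - marg_gain a x B) * pmf (pol \<theta>star B) x = 0"
      by (simp add: sum_nonneg_eq_0_iff)
    moreover have "pmf (pol \<theta>star B) x > 0" using x by (simp add: pmf_positive)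
    ultimately show ?thesis by simp
  qed
  have ind: "k \<le> n \<Longrightarrow> B \<in> set_pmf (GS a pol \<theta>star k l) \<Longrightarrow>
     B \<in> set_pmf (GS a pol \<theta>star k 1) \<and> (\<exists>xs. length xs = k \<and> B = set xs \<and>
        (\<forall>t<k. \<forall>x'. marg_gain a x' (set (take t xs)) \<le> marg_gain a (xs ! t) (set (take t xs))))"
    for k B
  proof (induction k arbitrary: B)
    case 0
    then show ?case by auto
  next
    case (Suc k)
    from Suc.prems(2) obtain B0 where B0: "B0 \<in> set_pmf (GS a pol \<theta>star k l)"
      and B: "B \<in> set_pmf (gs_step a (pol \<theta>star B0) l B0)" by auto
    obtain x where x: "x \<in> set_pmf (pol \<theta>star B0)" and Bx: "B = B0 \<union> {x}"
      using gs_step_supp[OF assms(3) B] by blast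
    from Suc.IH[OF _ B0] Suc.prems(1) obtain xs where
      S: "B0 \<in> set_pmf (GS a pol \<theta>star k 1)" and xs: "length xs = k" "B0 = set xs"
        "\<forall>t<k. \<forall>x'. marg_gain a x' (set (take t xs)) \<le> marg_gain a (xs ! t) (set (take t xs))"
      by auto
    have Kx: "marg_gain a x B0 = g B0" using K[OF _ S x] Suc.prems(1) by simp
    have "B \<in> set_pmf (GS a pol \<theta>star (Suc k) 1)"
      using S gs_step_1_supp[OF x, of B0 a] Bx by auto
    moreover have "\<forall>t<Suc k. \<forall>x'. marg_gain a x' (set (take t (xs @ [x])))
        \<le> marg_gain a ((xs @ [x]) ! t) (set (take t (xs @ [x])))"
    proof (intro allI impI)
      fix t x' assume t: "t < Suc k"
      show "marg_gain a x' (set (take t (xs @ [x]))) \<le> marg_gain a ((xs @ [x]) ! t) (set (take t (xs @ [x])))"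
      proof (cases "t < k")
        case True
        then show ?thesis using xs by (simp add: nth_append)
      next
        case False
        then have "t = k" using t by simp
        then show ?thesis using xs Kx gle by (simp add: nth_append)
      qed
    qed
    ultimately show ?case using xs Bx by (intro conjI exI[of _ "xs @ [x]"]) auto
  qed
  have "set_pmf (GS a pol \<theta>star n l) \<subseteq> {B. exact_greedy_solution a n B}"
    using ind[of n] unfolding exact_greedy_solution_def by blast
  then show ?thesis
    by (subst measure_pmf.prob_eq_1) (auto simp: AE_measure_pmf_iff)
qed

end
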